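(* Let $k\ge1$, $m=2k$, and let $R_m^+(\hat K)=P_m(\hat K)+\mathrm{span}\{\hat x^m\hat y,\ \hat x\hat y^m\}$. Let $g_{\pm1},\dots,g_{\pm k}$ be the $2k$ zeros of the Legendre polynomial of degree $2k$ on $[-1,1]$, indexed so that $0<g_1<\dots<g_k$ and $g_{-i}=-g_i$. Then every $\hat v\in R_m^+(\hat K)$ satisfies $$\sum_{\substack{i=-k\\ i\ne 0}}^{k}\frac{\hat v(1,g_i)-\hat v(-1,g_i)-\hat v(g_i,1)+\hat v(g_i,-1)}{g_i(1-g_i^2)\prod_{\substack{j=1\\ j\ne |i|}}^{k}(g_i^2-g_j^2)}=0.$$
   Context: $\hat K=[-1,1]^2$ with coordinates $(\hat x,\hat y)$; $P_m(\hat K)$ is the space of polynomials of total degree $\le m$. Empty products equal $1$. *)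

theory Defs
  imports "HOL-Computational_Algebra.Polynomial" Complex_Main
begin

definition legendre :: "nat \<Rightarrow> real poly" where
  "legendre n = smult (1 / (2 ^ n * fact n)) ((pderiv ^^ n) ([:-1, 0, 1:] ^ n))"

definition in_Rm_plus :: "nat \<Rightarrow> (real \<Rightarrow> real \<Rightarrow> real) \<Rightarrow> bool" where
  "in_Rm_plus m v \<longleftrightarrow> (\<exists>(c :: nat \<Rightarrow> nat \<Rightarrow> real) (a :: real) (b :: real).
      \<forall>x y. v x y = (\<Sum>i\<le>m. \<Sum>j\<le>m - i. c i j * x ^ i * y ^ j)
                    + a * x ^ m * y + b * x * y ^ m)"

end

theory Submission
  imports Defs
begin

lemma prod_lin_monic:
  fixes a :: "'b \<Rightarrow> real"
  assumes "finite T"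
  shows "degree (\<Prod>j\<in>T. [:- a j, 1:]) = card T \<and> coeff (\<Prod>j\<in>T. [:- a j, 1:]) (card T) = 1"
proof -
  have d: "degree (\<Prod>j\<in>T. [:- a j, 1:]) = card T"
    by (subst degree_prod_eq_sum_degree) auto
  have "lead_coeff (\<Prod>j\<in>T. [:- a j, 1:]) = 1" by (simp add: lead_coeff_prod)
  with d show ?thesis by simp
qed

lemma lagrange_sum_zero:
  fixes N :: "'a \<Rightarrow> real" and f :: "real poly"
  assumes fin: "finite I" and inj: "inj_on N I" and deg: "degree f + 2 \<le> card I"
  shows "(\<Sum>i\<in>I. poly f (N i) / (\<Prod>j\<in>I-{i}. N i - N j)) = 0"
proof -
  define n where "n = card I"
  define d where "d i = (\<Prod>j\<in>I-{i}. N i - N j)" for i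
  define B where "B i = (\<Prod>j\<in>I-{i}. [:- N j, 1:])" for i
  define L where "L = (\<Sum>i\<in>I. smult (poly f (N i) / d i) (B i))"
  have dnz: "d i \<noteq> 0" if "i \<in> I" for i
    unfolding d_def using fin inj that by (auto simp: inj_on_def)
  have polyB: "poly (B i) x = (\<Prod>j\<in>I-{i}. x - N j)" for i x
    unfolding B_def by (simp add: poly_prod)
  have Bdeg: "degree (B i) = n - 1 \<and> coeff (B i) (n - 1) = 1" if "i \<in> I" for i
    using prod_lin_monic[of "I-{i}" N] fin that unfolding B_def n_def by (simp add: card_Diff_singleton)
  have Lval: "poly L (N i0) = poly f (N i0)" if "i0 \<in> I" for i0
  proof -
    have "poly L (N i0) = (\<Sum>i\<in>I. poly f (N i) / d i * poly (B i) (N i0))"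
      unfolding L_def by (simp add: poly_sum)
    also have "\<dots> = (\<Sum>i\<in>{i0}. poly f (N i) / d i * poly (B i) (N i0))"
    proof (rule sum.mono_neutral_right)
      show "\<forall>i\<in>I - {i0}. poly f (N i) / d i * poly (B i) (N i0) = 0"
      proof
        fix i assume i: "i \<in> I - {i0}"
        have "poly (B i) (N i0) = 0" unfolding polyB
          using fin i that by (intro prod_zero) auto
        thus "poly f (N i) / d i * poly (B i) (N i0) = 0" by simp
      qed
    qed (use fin that in auto)
    also have "\<dots> = poly f (N i0)" using dnz[OF that] by (simp add: polyB d_def)
    finally show ?thesis .
  qed
  have degL: "degree L \<le> n - 1"
    unfolding L_def by (intro degree_sum_le fin) (use Bdeg in \<open>auto intro: order.trans[OF degree_smult_le]\<close>)
  have "L = f"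
  proof (rule poly_eqI_degree[of "N ` I"])
    show "card (N ` I) > degree L" using degL deg card_image[OF inj] unfolding n_def by linarith
    show "card (N ` I) > degree f" using deg card_image[OF inj] by linarith
  qed (use Lval in auto)
  hence "coeff L (n - 1) = coeff f (n - 1)" by simp
  also have "coeff f (n - 1) = 0" using deg unfolding n_def by (intro coeff_eq_0) linarith
  finally have "coeff L (n-1) = 0" .
  moreover have "coeff L (n - 1) = (\<Sum>i\<in>I. poly f (N i) / d i)"
    unfolding L_def coeff_sum coeff_smult by (intro sum.cong) (use Bdeg in auto)
  ultimately show ?thesis unfolding d_def by simp
qed

lemma pderiv_root_pow:
  fixes q :: "real poly"
  shows "poly ((pderiv ^^ n) ([:-1,1:]^n * q)) 1 = fact n * poly q 1"
proof (induction n arbitrary: q)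
  case 0 thus ?case by simp
next
  case (Suc n)
  have "pderiv ([:-1,1:]^(Suc n) * q) = [:-1,1:]^n * (smult (of_nat (Suc n)) q + [:-1,1:] * pderiv q)"
  proof -
    have d1: "pderiv [:-1,1::real:] = 1" by (simp add: pderiv_pCons)
    have gen: "X^(Suc n) * pq + q * (smult c (X^n) * 1) = X^n * (smult c q + X * pq)"
      for X pq :: "real poly" and c by (simp add: algebra_simps)
    show ?thesis by (simp only: pderiv_mult pderiv_power_Suc d1 gen)
  qed
  hence "(pderiv ^^ Suc n) ([:-1,1:]^(Suc n) * q) = (pderiv ^^ n) ([:-1,1:]^n * (smult (of_nat (Suc n)) q + [:-1,1:] * pderiv q))"
    by (simp add: funpow_Suc_right del: funpow.simps)
  then show ?case using Suc[of "smult (of_nat (Suc n)) q + [:-1,1:] * pderiv q"]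
    by simp
qed

lemma legendre_one_nz: "poly (legendre n) 1 \<noteq> 0"
proof -
  have "[:-1, 0, 1:] ^ n = [:-1,1:]^n * [:1,1::real:]^n"
    by (simp add: power_mult_distrib[symmetric])
  hence "poly ((pderiv ^^ n) ([:-1, 0, 1:] ^ n)) 1 = fact n * (2::real) ^ n"
    using pderiv_root_pow[of n "[:1,1:]^n"] by (simp add: poly_power)
  thus ?thesis unfolding legendre_def by simp
qed

lemma h_poly:
  fixes v :: "real \<Rightarrow> real \<Rightarrow> real"
  assumes v: "in_Rm_plus m v" and ev: "even m"
  shows "\<exists>f::real poly. degree f \<le> m \<and>
           (\<forall>t. poly f t = v 1 t - v (-1) t - v t 1 + v t (-1))"
proof -
  from v obtain c a b where veq: "\<And>x y. v x y = (\<Sum>i\<le>m. \<Sum>j\<le>m - i. c i j * x ^ i * y ^ j)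
                    + a * x ^ m * y + b * x * y ^ m" unfolding in_Rm_plus_def by blast
  define S where "S x y = (\<Sum>i\<le>m. \<Sum>j\<le>m - i. c i j * x ^ i * y ^ j)" for x y :: real
  define f where "f = (\<Sum>i\<le>m. \<Sum>j\<le>m - i. smult (c i j) (smult (1-(-1)^i) (monom 1 j) - smult (1-(-1)^j) (monom 1 i)))
                 + monom (2*b - 2*a) m"
  have deg: "degree f \<le> m"
    unfolding f_def
    by (intro degree_add_le degree_sum_le order.trans[OF degree_smult_le] degree_diff_le)
       (auto intro: order.trans[OF degree_smult_le] simp: degree_monom_le order.trans[OF degree_monom_le])
  have "poly f t = v 1 t - v (-1) t - v t 1 + v t (-1)" for t
  proof -
    have "poly f t = (\<Sum>i\<le>m. \<Sum>j\<le>m - i. c i j * 1 ^ i * t ^ j - c i j * (-1) ^ i * t ^ j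
                 - c i j * t ^ i * 1 ^ j + c i j * t ^ i * (-1) ^ j) + (2*b - 2*a) * t^m"
      unfolding f_def by (simp add: poly_sum poly_monom algebra_simps)
    also have "\<dots> = S 1 t - S (-1) t - S t 1 + S t (-1) + (2*b - 2*a) * t^m"
      unfolding S_def by (simp only: sum.distrib sum_subtractf)
    also have "\<dots> = v 1 t - v (-1) t - v t 1 + v t (-1)"
      unfolding veq S_def[symmetric] using ev by (simp add: algebra_simps)
    finally show ?thesis .
  qed
  with deg show ?thesis by blast
qed

theorem mainTheorem5:
  fixes k :: nat and m :: nat and g :: "nat \<Rightarrow> real" and v :: "real \<Rightarrow> real \<Rightarrow> real"
  assumes k: "k \<ge> 1"
    and m: "m = 2 * k"
    and g_pos: "0 < g 1"
    and g_mono: "\<And>i j. 1 \<le> i \<Longrightarrow> i < j \<Longrightarrow> j \<le> k \<Longrightarrow> g i < g j"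
    and g_zeros: "{x \<in> {-1..1}. poly (legendre (2 * k)) x = 0}
                  = g ` {1..k} \<union> (\<lambda>i. - g i) ` {1..k}"
    and v: "in_Rm_plus m v"
  shows "(let G = (\<lambda>i::int. if i > 0 then g (nat i) else - g (nat (- i))) in
          (\<Sum>i\<in>{-int k..int k} - {0}.
             (v 1 (G i) - v (-1) (G i) - v (G i) 1 + v (G i) (-1))
             / (G i * (1 - (G i)\<^sup>2) * (\<Prod>j\<in>{1..k} - {nat \<bar>i\<bar>}. (G i)\<^sup>2 - (g j)\<^sup>2)))) = 0"
  proof -
  define K where "K = int k"
  define G where "G = (\<lambda>i::int. if i > 0 then g (nat i) else - g (nat (- i)))"
  define ga where "ga n = (if n = k + 1 then 1 else g n)" for n
  define N where "N i = (if i = K + 1 then 1 else if i = -(K+1) then -1 else G i)" for i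
  define I where "I = {-(K+1)..K+1} - {0::int}"
  define J where "J = {-K..K} - {0::int}"
  define w where "w i = (\<Prod>j\<in>I-{i}. N i - N j)" for i
  obtain f where fdeg: "degree f \<le> m" and fpoly: "\<And>t. poly f t = v 1 t - v (-1) t - v t 1 + v t (-1)"
    using h_poly[OF v] m by auto
  have gpos: "0 < g n" if "1 \<le> n" "n \<le> k" for n
    using g_pos g_mono[of 1 n] that by (cases "n = 1") auto
  have gle1: "g n < 1" if "1 \<le> n" "n \<le> k" for n
  proof -
    have "g n \<in> {x \<in> {-1..1}. poly (legendre (2 * k)) x = 0}" using g_zeros that by auto
    hence "g n \<le> 1" "g n \<noteq> 1 \<or> poly (legendre (2 * k)) 1 = 0" by auto
    thus ?thesis using legendre_one_nz[of "2*k"] by auto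
  qed
  have gamono: "ga n < ga n'" if "1 \<le> n" "n < n'" "n' \<le> k + 1" for n n'
    using that g_mono[of n n'] gle1[of n] unfolding ga_def by auto
  have gapos: "0 < ga n" if "1 \<le> n" "n \<le> k + 1" for n
    using gpos[of n] that unfolding ga_def by auto
  have Nform: "N i = sgn (of_int i) * ga (nat \<bar>i\<bar>)" if "i \<in> I" for i
    using that unfolding N_def I_def G_def ga_def K_def by (auto simp: sgn_if)
  have Nneg: "N (-i) = - N i" if "i \<in> I" for i
  proof -
    have "-i \<in> I" using that unfolding I_def by auto
    thus ?thesis using Nform[OF that] Nform[of "-i"] by simp
  qed
  have gainj: "ga n = ga n' \<Longrightarrow> n = n'" if "1 \<le> n" "n \<le> k + 1" "1 \<le> n'" "n' \<le> k + 1" for n n'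
    using gamono[of n n'] gamono[of n' n] that by (cases n n' rule: linorder_cases) auto
  have inj: "inj_on N I"
  proof
    fix i j assume i: "i \<in> I" and j: "j \<in> I" and eq: "N i = N j"
    have ri: "1 \<le> nat \<bar>i\<bar>" "nat \<bar>i\<bar> \<le> k + 1" and rj: "1 \<le> nat \<bar>j\<bar>" "nat \<bar>j\<bar> \<le> k + 1"
      using i j unfolding I_def K_def by auto
    have pi: "0 < ga (nat \<bar>i\<bar>)" and pj: "0 < ga (nat \<bar>j\<bar>)" using gapos ri rj by auto
    have "sgn (of_int i :: real) = sgn (of_int j)" and "ga (nat \<bar>i\<bar>) = ga (nat \<bar>j\<bar>)"
      using eq Nform[OF i] Nform[OF j] pi pj i j unfolding I_def
      by (auto simp: sgn_if split: if_splits)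
    moreover have "nat \<bar>i\<bar> = nat \<bar>j\<bar>" using gainj ri rj calculation(2) by blast
    ultimately show "i = j" using i j unfolding I_def by (auto simp: sgn_if split: if_splits)
  qed
  have cardI: "card I = 2 * k + 2" unfolding I_def K_def by (simp add: card_Diff_singleton)
  have lag: "(\<Sum>i\<in>I. poly f (N i) / w i) = 0"
    unfolding w_def by (rule lagrange_sum_zero) (use inj fdeg m cardI in \<open>auto simp: I_def\<close>)
  have Isplit: "I = insert (K+1) (insert (-(K+1)) J)" unfolding I_def J_def K_def by auto
  have nJ: "K + 1 \<notin> J" "-(K+1) \<notin> J" "K + 1 \<noteq> -(K+1)" unfolding J_def K_def by auto
  have finJ: "finite J" unfolding J_def by auto
  have KI: "K + 1 \<in> I" unfolding I_def K_def by auto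
  have wneg: "w (-(K+1)) = - w (K+1)"
  proof -
    have um0: "uminus ` (I - {K+1}) = {j. -j \<in> I - {K+1}}" by (auto simp: image_iff intro!: bexI[of _ "- x" for x])
    have "I - {-(K+1)} = uminus ` (I - {K+1})"
      unfolding um0 unfolding I_def by auto
    hence "w (-(K+1)) = (\<Prod>j\<in>I - {K+1}. N (-(K+1)) - N (- j))"
      unfolding w_def by (simp add: prod.reindex)
    also have "\<dots> = (\<Prod>j\<in>I - {K+1}. - (N (K+1) - N j))"
    proof (intro prod.cong refl)
      fix j assume "j \<in> I - {K+1}"
      hence "N (- j) = - N j" using Nneg by auto
      moreover have "N (-(K+1)) = -1" "N (K+1) = 1" unfolding N_def K_def by auto
      ultimately show "N (-(K+1)) - N (- j) = - (N (K+1) - N j)" by simp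
    qed
    also have "\<dots> = (-1) ^ card (I - {K+1}) * w (K+1)" unfolding w_def by (rule prod_uminus)
    also have "card (I - {K+1}) = 2 * k + 1" using cardI KI by (simp add: card_Diff_singleton)
    finally show ?thesis by simp
  qed
  have ends: "poly f (N (K+1)) / w (K+1) + poly f (N (-(K+1))) / w (-(K+1)) = 0"
    using wneg unfolding N_def by (simp add: fpoly)
  have sumJ: "(\<Sum>i\<in>J. poly f (N i) / w i) = 0"
    using lag ends nJ finJ unfolding Isplit by (simp add: algebra_simps)
  have wJ: "w i = -2 * (G i * (1 - (G i)\<^sup>2) * (\<Prod>j\<in>{1..k} - {nat \<bar>i\<bar>}. (G i)\<^sup>2 - (g j)\<^sup>2))"
    if iJ: "i \<in> J" for i
  proof -
    define x where "x = N i"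
    have xG: "x = G i" using iJ unfolding x_def N_def J_def K_def by auto
    have iI: "i \<in> I" using iJ unfolding I_def J_def by auto
    define A where "A = {1..K+1} - {\<bar>i\<bar>}"
    have um: "uminus ` A = {j. -j \<in> A}" by (auto simp: image_iff intro!: bexI[of _ "- x" for x])
    have Ieq: "I - {i} = insert (-i) (A \<union> uminus ` A)"
      using iJ unfolding um unfolding A_def I_def J_def K_def by auto
    have dis: "-i \<notin> A \<union> uminus ` A" "A \<inter> uminus ` A = {}"
      using iJ unfolding um unfolding A_def J_def by auto
    have AI: "j \<in> I" if "j \<in> A" for j using that unfolding A_def I_def by auto
    have "w i = (x - N (-i)) * ((\<Prod>j\<in>A. x - N j) * (\<Prod>j\<in>uminus ` A. x - N j))"
      unfolding w_def x_def[symmetric] Ieq using dis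
      by (simp add: prod.union_disjoint A_def)
    also have "(\<Prod>j\<in>uminus ` A. x - N j) = (\<Prod>j\<in>A. x + N j)"
      by (simp add: prod.reindex Nneg AI)
    also have "(\<Prod>j\<in>A. x - N j) * (\<Prod>j\<in>A. x + N j) = (\<Prod>j\<in>A. x\<^sup>2 - (N j)\<^sup>2)"
      by (simp add: prod.distrib[symmetric] power2_eq_square algebra_simps)
    also have "A = insert (K+1) ({1..K} - {\<bar>i\<bar>})" using iJ unfolding A_def J_def by auto
    also have "(\<Prod>j\<in>insert (K+1) ({1..K} - {\<bar>i\<bar>}). x\<^sup>2 - (N j)\<^sup>2)
             = (x\<^sup>2 - 1) * (\<Prod>j\<in>{1..K} - {\<bar>i\<bar>}. x\<^sup>2 - (N j)\<^sup>2)"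
      by (simp add: N_def)
    also have "{1..K} - {\<bar>i\<bar>} = int ` ({1..k} - {nat \<bar>i\<bar>})"
    proof (rule set_eqI, rule iffI)
      fix x assume x: "x \<in> {1..K} - {\<bar>i\<bar>}"
      hence "x = int (nat x)" "nat x \<in> {1..k} - {nat \<bar>i\<bar>}" using iJ unfolding J_def K_def by auto
      thus "x \<in> int ` ({1..k} - {nat \<bar>i\<bar>})" by (rule image_eqI)
    next
      fix x assume "x \<in> int ` ({1..k} - {nat \<bar>i\<bar>})"
      thus "x \<in> {1..K} - {\<bar>i\<bar>}" using iJ unfolding J_def K_def by auto
    qed
    also have "(\<Prod>j\<in>int ` ({1..k} - {nat \<bar>i\<bar>}). x\<^sup>2 - (N j)\<^sup>2) = (\<Prod>j\<in>{1..k} - {nat \<bar>i\<bar>}. x\<^sup>2 - (g j)\<^sup>2)"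
      by (subst prod.reindex) (auto simp: N_def G_def K_def intro!: prod.cong)
    also have "x - N (-i) = 2 * x" using Nneg[OF iI] x_def by simp
    finally show ?thesis unfolding xG by (simp add: algebra_simps power2_eq_square)
  qed
  have "(\<Sum>i\<in>{-int k..int k} - {0}.
             (v 1 (G i) - v (-1) (G i) - v (G i) 1 + v (G i) (-1))
             / (G i * (1 - (G i)\<^sup>2) * (\<Prod>j\<in>{1..k} - {nat \<bar>i\<bar>}. (G i)\<^sup>2 - (g j)\<^sup>2)))
        = (\<Sum>i\<in>J. -2 * (poly f (N i) / w i))"
  proof (intro sum.cong)
    show "{-int k..int k} - {0} = J" unfolding J_def K_def ..
  next
    fix i assume iJ: "i \<in> J"
    have NG: "N i = G i" using iJ unfolding N_def J_def K_def by auto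
    show "(v 1 (G i) - v (-1) (G i) - v (G i) 1 + v (G i) (-1))
             / (G i * (1 - (G i)\<^sup>2) * (\<Prod>j\<in>{1..k} - {nat \<bar>i\<bar>}. (G i)\<^sup>2 - (g j)\<^sup>2))
          = -2 * (poly f (N i) / w i)"
    proof -
      have gen: "a / D = -2 * (a / (-2 * D))" for a D :: real by (cases "D = 0") (auto simp: field_simps)
      show ?thesis unfolding wJ[OF iJ] NG fpoly by (rule gen)
    qed
  qed
  also have "\<dots> = 0" using sumJ by (simp only: sum_distrib_left[symmetric])
  finally show ?thesis unfolding Let_def G_def .
qed


end
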